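(* Let $(X,d,\mu)$, $p$, $\underline{Q}_\mu$ be as in the context. Fix $\underline{\theta}\in[0,\min\{p,\underline{Q}_\mu\})$, $\theta\in[\underline{\theta},p)$, an integer $N\ge2$, numbers $0\le\theta_1<\dots<\theta_N=\underline{\theta}$, closed sets $S^i\in\mathcal{ADR}_{\theta_i}(X)$, and $\mathfrak m_k:=\sum_{i=1}^N2^{k(\theta-\theta_i)}\mathcal H_{\theta_i}\lfloor_{S^i}$, $k\in\mathbb N_0$. Then for each $c\ge1$ there is a constant $C>0$ such that for each $i\in\{1,\dots,N\}$ and each $k\in\mathbb N_0$ the following holds: if $\underline x\in X$ and $x\in S^i$ satisfy $B_k(x)\subset cB_k(\underline x)$, then $$2^{k(\theta-\theta_i)}\mathcal H_{\theta_i}(cB_k(\underline x)\cap S^i)\le\mathfrak m_k(cB_k(\underline x))\le C2^{k(\theta-\theta_i)}\mathcal H_{\theta_i}(B_k(x)\cap S^i).$$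
   Context: Standing setting: $(X,d)$ complete separable metric space, $\mu$ a Borel regular locally finite outer measure, $\operatorname{supp}\mu=X$, uniformly locally doubling (for every $R>0$, $\sup_{r\in(0,R]}\sup_x\mu(B_{2r}(x))/\mu(B_r(x))<\infty$). Balls are closed, $B_r(x)=\{y:d(x,y)\le r\}$, $cB_r(x)=B_{cr}(x)$, $B_k(x)=B_{2^{-k}}(x)$. A fixed $p\in(1,\infty)$; $X$ supports a weak local $(1,p)$-Poincaré inequality (for every $R>0$ there are $C,\lambda\ge1$ with $\inf_c\frac{1}{\mu(B_r(x))}\int_{B_r(x)}|f-c|d\mu\le Cr(\frac{1}{\mu(B_{\lambda r}(x))}\int_{B_{\lambda r}(x)}(\operatorname{lip}f)^pd\mu)^{1/p}$ for Lipschitz $f$, $x\in X$, $r\in(0,R]$). $\underline{Q}_\mu$ is the infimum of $Q>0$ such that for every $R>0$ there is $C$ with $(r_{B'}/r_B)^Q\le C\mu(B')/\mu(B)$ for balls $B'\subset B$, $0<r_{B'}\le r_B\le R$. $\mathcal H_{\vartheta,\delta}(E):=\inf\{\sum\mu(B_{r_i}(x_i))r_i^{-\vartheta}:E\subset\bigcup B_{r_i}(x_i),0<r_i<\delta\}$, $\mathcal H_\vartheta=\lim_{\delta\to0}\mathcal H_{\vartheta,\delta}$; $\mathfrak m\lfloor_S(E)=\mathfrak m(E\cap S)$. $\mathcal{ADR}_\vartheta(X)$: closed $S'$ with $\varkappa_1\mu(B_r(x))r^{-\vartheta}\le\mathcal H_\vartheta(B_r(x)\cap S')\le\varkappa_2\mu(B_r(x))r^{-\vartheta}$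 for $x\in S'$, $r\in(0,1]$. *)

theory Defs
  imports "HOL-Analysis.Analysis"
begin

definition outer_measure :: "('a set \<Rightarrow> ennreal) \<Rightarrow> bool" where
  "outer_measure \<mu> \<longleftrightarrow> \<mu> {} = 0 \<and> (\<forall>A B. A \<subseteq> B \<longrightarrow> \<mu> A \<le> \<mu> B)
     \<and> (\<forall>A :: nat \<Rightarrow> 'a set. \<mu> (\<Union>i. A i) \<le> (\<Sum>i. \<mu> (A i)))"

definition borel_regular :: "('a::topological_space set \<Rightarrow> ennreal) \<Rightarrow> bool" where
  "borel_regular \<mu> \<longleftrightarrow>
     (\<forall>B\<in>sets borel. \<forall>A. \<mu> A = \<mu> (A \<inter> B) + \<mu> (A - B))
     \<and> (\<forall>A. \<exists>B\<in>sets borel. A \<subseteq> B \<and> \<mu> B = \<mu> A)"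

definition locally_finite_om :: "('a::metric_space set \<Rightarrow> ennreal) \<Rightarrow> bool" where
  "locally_finite_om \<mu> \<longleftrightarrow> (\<forall>x. \<exists>r>0. \<mu> (cball x r) < \<infinity>)"

definition full_support :: "('a::metric_space set \<Rightarrow> ennreal) \<Rightarrow> bool" where
  "full_support \<mu> \<longleftrightarrow> (\<forall>x. \<forall>r>0. 0 < \<mu> (cball x r))"

definition unif_loc_doubling :: "('a::metric_space set \<Rightarrow> ennreal) \<Rightarrow> bool" where
  "unif_loc_doubling \<mu> \<longleftrightarrow> (\<forall>R>0. \<exists>C::real. \<forall>r. 0 < r \<and> r \<le> R \<longrightarrow>
      (\<forall>x. \<mu> (cball x (2*r)) \<le> ennreal C * \<mu> (cball x r)))"

definition mu_measure :: "('a::topological_space set \<Rightarrow> ennreal) \<Rightarrow> 'a measure" where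
  "mu_measure \<mu> = measure_of UNIV (sets borel) \<mu>"

definition avg :: "('a::topological_space set \<Rightarrow> ennreal) \<Rightarrow> 'a set \<Rightarrow> ('a \<Rightarrow> real) \<Rightarrow> real" where
  "avg \<mu> B g = enn2real (\<integral>\<^sup>+ y\<in>B. ennreal (g y) \<partial>(mu_measure \<mu>)) / enn2real (\<mu> B)"

definition lip :: "('a::metric_space \<Rightarrow> real) \<Rightarrow> 'a \<Rightarrow> real" where
  "lip f x = real_of_ereal (Liminf (at_right (0::real))
      (\<lambda>r. SUP y\<in>cball x r. ereal (\<bar>f y - f x\<bar> / r)))"

definition weak_local_poincare :: "('a::metric_space set \<Rightarrow> ennreal) \<Rightarrow> real \<Rightarrow> bool" where
  "weak_local_poincare \<mu> p \<longleftrightarrow> (\<forall>R>0. \<exists>C \<ge> 1. \<exists>lam \<ge> 1.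
     \<forall>f :: 'a \<Rightarrow> real. \<forall>x r. (\<exists>L. L-lipschitz_on UNIV f) \<and> 0 < r \<and> r \<le> R \<longrightarrow>
       (INF c::real. avg \<mu> (cball x r) (\<lambda>y. \<bar>f y - c\<bar>))
         \<le> C * r * (avg \<mu> (cball x (lam*r)) (\<lambda>y. lip f y powr p)) powr (1/p))"

definition standing_setting :: "('a::polish_space set \<Rightarrow> ennreal) \<Rightarrow> real \<Rightarrow> bool" where
  "standing_setting \<mu> p \<longleftrightarrow> outer_measure \<mu> \<and> borel_regular \<mu> \<and> locally_finite_om \<mu>
     \<and> full_support \<mu> \<and> unif_loc_doubling \<mu> \<and> 1 < p \<and> weak_local_poincare \<mu> p"

text \<open>Lower dimension Q_mu (balls given by center and radius).\<close>
definition Q_low :: "('a::metric_space set \<Rightarrow> ennreal) \<Rightarrow> real" where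
  "Q_low \<mu> = Inf {Q. 0 < Q \<and> (\<forall>R>0. \<exists>C::real. \<forall>x x' r r'.
      cball x' r' \<subseteq> cball x r \<and> 0 < r' \<and> r' \<le> r \<and> r \<le> R \<longrightarrow>
        ennreal ((r'/r) powr Q) * \<mu> (cball x r) \<le> ennreal C * \<mu> (cball x' r'))}"

text \<open>Codimensional Hausdorff contents H_{theta,delta} over countable covers
  (index set I of naturals, possibly finite).\<close>
definition H_delta :: "('a::metric_space set \<Rightarrow> ennreal) \<Rightarrow> real \<Rightarrow> real \<Rightarrow> 'a set \<Rightarrow> ennreal" where
  "H_delta \<mu> \<theta> \<delta> E = (INF (I, x, r) \<in> {(I :: nat set, x :: nat \<Rightarrow> 'a, r :: nat \<Rightarrow> real).
        E \<subseteq> (\<Union>i\<in>I. cball (x i) (r i)) \<and> (\<forall>i\<in>I. 0 < r i \<and> r i < \<delta>)}.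
      (\<Sum>i. if i \<in> I then \<mu> (cball (x i) (r i)) * ennreal (r i powr (-\<theta>)) else 0))"

definition H_cod :: "('a::metric_space set \<Rightarrow> ennreal) \<Rightarrow> real \<Rightarrow> 'a set \<Rightarrow> ennreal" where
  "H_cod \<mu> \<theta> E = (SUP \<delta>\<in>{0<..}. H_delta \<mu> \<theta> \<delta> E)"

definition ADR :: "('a::metric_space set \<Rightarrow> ennreal) \<Rightarrow> real \<Rightarrow> 'a set set" where
  "ADR \<mu> \<theta> = {S. closed S \<and> (\<exists>\<kappa>1 \<kappa>2. 0 < \<kappa>1 \<and> 0 < \<kappa>2 \<and>
      (\<forall>x\<in>S. \<forall>r. 0 < r \<and> r \<le> 1 \<longrightarrow>
        ennreal \<kappa>1 * \<mu> (cball x r) * ennreal (r powr (-\<theta>)) \<le> H_cod \<mu> \<theta> (cball x r \<inter> S)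
        \<and> H_cod \<mu> \<theta> (cball x r \<inter> S) \<le> ennreal \<kappa>2 * \<mu> (cball x r) * ennreal (r powr (-\<theta>))))}"

definition m_k :: "('a::metric_space set \<Rightarrow> ennreal) \<Rightarrow> real \<Rightarrow> nat \<Rightarrow> (nat \<Rightarrow> real)
     \<Rightarrow> (nat \<Rightarrow> 'a set) \<Rightarrow> nat \<Rightarrow> 'a set \<Rightarrow> ennreal" where
  "m_k \<mu> \<theta> N th S k E = (\<Sum>i\<in>{1..N}. ennreal (2 powr (real k * (\<theta> - th i))) * H_cod \<mu> (th i) (E \<inter> S i))"

end

theory Submission
  imports Defs
begin

lemma suminf_interleave:
  fixes f :: "nat \<Rightarrow> ennreal"
  shows "(\<Sum>n. f n) = (\<Sum>n. f (2*n)) + (\<Sum>n. f (2*n+1))"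
proof -
  have "(\<lambda>n. sum f {n*2..<n*2+2}) sums (\<Sum>n. f n)"
    by (rule sums_group) (auto intro: summable_sums summableI)
  moreover have "\<And>n. sum f {n*2..<n*2+2} = f (2*n) + f (2*n+1)"
    by (simp add: numeral_2_eq_2 mult.commute)
  ultimately have "(\<lambda>n. f (2*n) + f (2*n+1)) sums (\<Sum>n. f n)" by simp
  hence "(\<Sum>n. f n) = (\<Sum>n. f (2*n) + f (2*n+1))" by (simp add: sums_unique)
  also have "\<dots> = (\<Sum>n. f (2*n)) + (\<Sum>n. f (2*n+1))"
    by (rule suminf_add[symmetric]) (auto intro: summableI)
  finally show ?thesis .
qed

lemma H_delta_mono:
  assumes "A \<subseteq> B" shows "H_delta \<mu> \<theta> \<delta> A \<le> H_delta \<mu> \<theta> \<delta> B"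
  unfolding H_delta_def
  by (rule INF_superset_mono) (use assms in auto)

lemma H_cod_mono:
  assumes "A \<subseteq> B" shows "H_cod \<mu> \<theta> A \<le> H_cod \<mu> \<theta> B"
  unfolding H_cod_def by (rule SUP_mono) (use H_delta_mono[OF assms] in blast)

lemma H_delta_empty: "H_delta \<mu> \<theta> \<delta> {} = 0"
proof -
  have "H_delta \<mu> \<theta> \<delta> {} \<le> 0"
    unfolding H_delta_def by (rule INF_lower2[where i="({}, undefined, undefined)"]) auto
  thus ?thesis by simp
qed

lemma H_cod_empty: "H_cod \<mu> \<theta> {} = 0"
  unfolding H_cod_def H_delta_empty by simp

lemma H_delta_union:
  "H_delta \<mu> \<theta> \<delta> (A \<union> B) \<le> H_delta \<mu> \<theta> \<delta> A + H_delta \<mu> \<theta> \<delta> B"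
proof -
  define cost where "cost = (\<lambda>(I :: nat set, x :: nat \<Rightarrow> 'a, r :: nat \<Rightarrow> real).
      (\<Sum>i. if i \<in> I then \<mu> (cball (x i) (r i)) * ennreal (r i powr (-\<theta>)) else 0))"
  define cov where "cov = (\<lambda>E. {(I :: nat set, x :: nat \<Rightarrow> 'a, r :: nat \<Rightarrow> real).
        E \<subseteq> (\<Union>i\<in>I. cball (x i) (r i)) \<and> (\<forall>i\<in>I. 0 < r i \<and> r i < \<delta>)})"
  have Hd: "H_delta \<mu> \<theta> \<delta> E = (INF t \<in> cov E. cost t)" for E
    unfolding H_delta_def cov_def cost_def by simp
  have key: "H_delta \<mu> \<theta> \<delta> (A \<union> B) \<le> cost t1 + cost t2" if "t1 \<in> cov A" "t2 \<in> cov B" for t1 t2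
  proof -
    obtain I1 x1 r1 where t1: "t1 = (I1, x1, r1)" by (cases t1) auto
    obtain I2 x2 r2 where t2: "t2 = (I2, x2, r2)" by (cases t2) auto
    define I where "I = (\<lambda>n. 2*n) ` I1 \<union> (\<lambda>n. 2*n+1) ` I2"
    define x where "x = (\<lambda>i. if even i then x1 (i div 2) else x2 (i div 2))"
    define r where "r = (\<lambda>i. if even i then r1 (i div 2) else r2 (i div 2))"
    have "(I, x, r) \<in> cov (A \<union> B)"
      using that unfolding t1 t2 cov_def I_def x_def r_def by (auto 0 3)
    hence "H_delta \<mu> \<theta> \<delta> (A \<union> B) \<le> cost (I, x, r)"
      unfolding Hd by (rule INF_lower)
    also have "cost (I, x, r) = cost t1 + cost t2"
    proof -
      have m1: "2*n \<in> I \<longleftrightarrow> n \<in> I1" for n unfolding I_def by (auto, presburger)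
      have m2: "2*n+1 \<in> I \<longleftrightarrow> n \<in> I2" for n unfolding I_def by (auto, presburger)
      have m3: "Suc (2*n) \<in> I \<longleftrightarrow> n \<in> I2" for n using m2 by simp
      have e1: "x (2*n) = x1 n" "r (2*n) = r1 n" "x (2*n+1) = x2 n" "r (2*n+1) = r2 n" for n
        unfolding x_def r_def by auto
      show ?thesis
        unfolding cost_def t1 t2 split
        by (subst suminf_interleave) (simp only: m1 m2 e1)
    qed
    finally show ?thesis .
  qed
  show ?thesis
  proof (cases "H_delta \<mu> \<theta> \<delta> A = \<infinity> \<or> H_delta \<mu> \<theta> \<delta> B = \<infinity>")
    case True thus ?thesis by auto
  next
    case False
    show ?thesis
    proof (rule ennreal_le_epsilon)
      fix e :: real assume e: "0 < e"
      obtain t1 where t1: "t1 \<in> cov A" "cost t1 < H_delta \<mu> \<theta> \<delta> A + ennreal (e/2)"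
        using INF_approx_ennreal[where e="e/2" and x="H_delta \<mu> \<theta> \<delta> A" and A="cov A" and f=cost] e False Hd by auto
      obtain t2 where t2: "t2 \<in> cov B" "cost t2 < H_delta \<mu> \<theta> \<delta> B + ennreal (e/2)"
        using INF_approx_ennreal[where e="e/2" and x="H_delta \<mu> \<theta> \<delta> B" and A="cov B" and f=cost] e False Hd by auto
      have "H_delta \<mu> \<theta> \<delta> (A \<union> B) \<le> cost t1 + cost t2" using key t1 t2 by blast
      also have "\<dots> \<le> (H_delta \<mu> \<theta> \<delta> A + ennreal (e/2)) + (H_delta \<mu> \<theta> \<delta> B + ennreal (e/2))"
        using t1 t2 by (intro add_mono) auto
      also have "\<dots> = H_delta \<mu> \<theta> \<delta> A + H_delta \<mu> \<theta> \<delta> B + ennreal e"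
        using e by (simp add: ac_simps flip: ennreal_plus)
      finally show "H_delta \<mu> \<theta> \<delta> (A \<union> B) \<le> H_delta \<mu> \<theta> \<delta> A + H_delta \<mu> \<theta> \<delta> B + ennreal e" .
    qed
  qed
qed

lemma H_cod_union:
  "H_cod \<mu> \<theta> (A \<union> B) \<le> H_cod \<mu> \<theta> A + H_cod \<mu> \<theta> B"
  unfolding H_cod_def
proof (rule SUP_least)
  fix \<delta> :: real assume d: "\<delta> \<in> {0<..}"
  have "H_delta \<mu> \<theta> \<delta> (A \<union> B) \<le> H_delta \<mu> \<theta> \<delta> A + H_delta \<mu> \<theta> \<delta> B" by (rule H_delta_union)
  also have "\<dots> \<le> (SUP \<delta>\<in>{0<..}. H_delta \<mu> \<theta> \<delta> A) + (SUP \<delta>\<in>{0<..}. H_delta \<mu> \<theta> \<delta> B)"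
    using d by (intro add_mono SUP_upper)
  finally show "H_delta \<mu> \<theta> \<delta> (A \<union> B) \<le> \<dots>" .
qed

lemma H_cod_UN:
  assumes "finite Z"
  shows "H_cod \<mu> \<theta> (\<Union>z\<in>Z. F z) \<le> (\<Sum>z\<in>Z. H_cod \<mu> \<theta> (F z))"
  using assms
proof (induction Z rule: finite_induct)
  case empty thus ?case by (simp add: H_cod_empty)
next
  case (insert z Z)
  have "H_cod \<mu> \<theta> (\<Union>z\<in>insert z Z. F z) = H_cod \<mu> \<theta> (F z \<union> (\<Union>z\<in>Z. F z))" by simp
  also have "\<dots> \<le> H_cod \<mu> \<theta> (F z) + H_cod \<mu> \<theta> (\<Union>z\<in>Z. F z)" by (rule H_cod_union)
  also have "\<dots> \<le> H_cod \<mu> \<theta> (F z) + (\<Sum>z\<in>Z. H_cod \<mu> \<theta> (F z))" using insert by (intro add_mono) auto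
  finally show ?case using insert by simp
qed

lemma om_mono: "outer_measure \<mu> \<Longrightarrow> A \<subseteq> B \<Longrightarrow> \<mu> A \<le> \<mu> B"
  unfolding outer_measure_def by blast

lemma doubling_const:
  assumes "unif_loc_doubling \<mu>" "R > 0"
  shows "\<exists>C\<ge>0. \<forall>r x. 0 < r \<and> r \<le> R \<longrightarrow> \<mu> (cball x (2*r)) \<le> ennreal C * \<mu> (cball x r)"
proof -
  obtain C :: real where C: "\<forall>r. 0 < r \<and> r \<le> R \<longrightarrow> (\<forall>x. \<mu> (cball x (2*r)) \<le> ennreal C * \<mu> (cball x r))"
    using assms unfolding unif_loc_doubling_def by blast
  have "ennreal (max C 0) = ennreal C" by (simp add: max_def ennreal_neg)
  thus ?thesis using C by (intro exI[of _ "max C 0"]) auto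
qed

lemma doubling_iter:
  assumes D: "\<forall>r x. 0 < r \<and> r \<le> R \<longrightarrow> \<mu> (cball x (2*r)) \<le> ennreal C * \<mu> (cball x r)"
    and C: "C \<ge> 0"
  shows "0 < r \<Longrightarrow> 2^m * r \<le> 2*R \<Longrightarrow> \<mu> (cball x (2^m * r)) \<le> ennreal (C^m) * \<mu> (cball x r)"
proof (induction m)
  case 0 thus ?case by simp
next
  case (Suc m)
  have le: "2^m * r \<le> R" using Suc.prems by simp
  have "\<mu> (cball x (2^Suc m * r)) = \<mu> (cball x (2 * (2^m * r)))" by (simp add: mult.assoc)
  also have "\<dots> \<le> ennreal C * \<mu> (cball x (2^m * r))"
    using D le Suc.prems by simp
  also have "\<dots> \<le> ennreal C * (ennreal (C^m) * \<mu> (cball x r))"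
  proof -
    have "0 < 2^m * r" using Suc.prems by simp
    hence "2^m * r \<le> 2*R" using le by linarith
    thus ?thesis using Suc.IH Suc.prems by (intro mult_left_mono) auto
  qed
  also have "\<dots> = ennreal (C^Suc m) * \<mu> (cball x r)"
    using C by (simp add: ennreal_mult mult.assoc)
  finally show ?case .
qed

lemma ball_finite:
  assumes "outer_measure \<mu>" "locally_finite_om \<mu>" "unif_loc_doubling \<mu>"
  shows "\<mu> (cball x \<rho>) < \<infinity>"
proof -
  obtain r0 where r0: "r0 > 0" "\<mu> (cball x r0) < \<infinity>"
    using assms(2) unfolding locally_finite_om_def by blast
  obtain m :: nat where m: "\<rho> / r0 < 2^m" using real_arch_pow[of 2 "\<rho>/r0"] by auto
  have "\<rho> \<le> 2^m * r0" using m r0 by (simp add: field_simps)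
  obtain C where C: "C \<ge> 0" "\<forall>r x. 0 < r \<and> r \<le> 2^m * r0 \<longrightarrow> \<mu> (cball x (2*r)) \<le> ennreal C * \<mu> (cball x r)"
    using doubling_const[OF assms(3), of "2^m * r0"] r0 by auto
  have "\<mu> (cball x \<rho>) \<le> \<mu> (cball x (2^m * r0))"
    using om_mono[OF assms(1)] \<open>\<rho> \<le> 2^m * r0\<close> by (simp add: subset_cball)
  also have "\<dots> \<le> ennreal (C^m) * \<mu> (cball x r0)"
    using doubling_iter[OF C(2) C(1), of r0 m x] r0 by simp
  also have "\<dots> < \<infinity>" using r0 by (simp add: ennreal_mult_less_top)
  finally show ?thesis .
qed

lemma mu_disjoint_sum:
  assumes "borel_regular \<mu>" "finite Z" "outer_measure \<mu>"
    and "\<forall>z\<in>Z. \<forall>z'\<in>Z. z \<noteq> z' \<longrightarrow> cball z r \<inter> cball z' r = {}"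
  shows "\<mu> (\<Union>z\<in>Z. cball z r) = (\<Sum>z\<in>Z. \<mu> (cball z r))"
  using assms(2,4)
proof (induction Z rule: finite_induct)
  case empty
  have "\<mu> {} = 0" using assms(3) unfolding outer_measure_def by blast
  thus ?case by simp
next
  case (insert z Z)
  let ?A = "\<Union>z\<in>insert z Z. cball z r"
  have "cball z r \<in> sets borel" by (simp add: borel_closed)
  have "\<mu> ?A = \<mu> (?A \<inter> cball z r) + \<mu> (?A - cball z r)"
  proof -
    have H: "\<forall>B\<in>sets borel. \<forall>A. \<mu> A = \<mu> (A \<inter> B) + \<mu> (A - B)"
      using assms(1) unfolding borel_regular_def by (rule conjunct1)
    show ?thesis by (rule H[rule_format, OF \<open>cball z r \<in> sets borel\<close>])
  qed
  moreover have "?A \<inter> cball z r = cball z r" by auto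
  moreover have "?A - cball z r = (\<Union>z\<in>Z. cball z r)"
  proof -
    have d: "\<forall>z'\<in>Z. cball z r \<inter> cball z' r = {}" using insert.prems insert.hyps(2) by (metis insertCI)
    show ?thesis using d by (auto simp del: mem_cball)
  qed
  moreover have "\<mu> (\<Union>z\<in>Z. cball z r) = (\<Sum>z\<in>Z. \<mu> (cball z r))"
    using insert.IH insert.prems by (meson insert_iff)
  ultimately show ?case using insert.hyps by (simp only: sum.insert[OF insert.hyps])
qed

definition sepd :: "real \<Rightarrow> 'a::metric_space set \<Rightarrow> bool" where
  "sepd s Z \<longleftrightarrow> (\<forall>z\<in>Z. \<forall>z'\<in>Z. z \<noteq> z' \<longrightarrow> s < dist z z')"

lemma packing:
  fixes \<mu> :: "'a::polish_space set \<Rightarrow> ennreal"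
  assumes set: "standing_setting \<mu> p" and c: "c \<ge> 1"
  shows "\<exists>M::nat. \<forall>s (w::'a) Z. 0 < s \<and> s \<le> 1 \<and> finite Z \<and> Z \<subseteq> cball w (c * s) \<and> sepd s Z \<longrightarrow> card Z \<le> M"
proof -
  have om: "outer_measure \<mu>" and br: "borel_regular \<mu>" and lf: "locally_finite_om \<mu>"
    and fs: "full_support \<mu>" and dbl: "unif_loc_doubling \<mu>"
    using set unfolding standing_setting_def by auto
  obtain m :: nat where m: "4*c+2 < 2^m" using real_arch_pow[of 2 "4*c+2"] by auto
  obtain C where C: "C \<ge> 0" "\<forall>r x. 0 < r \<and> r \<le> 2^m \<longrightarrow> \<mu> (cball x (2*r)) \<le> ennreal C * \<mu> (cball x r)"
    using doubling_const[OF dbl, of "2^m"] by auto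
  define Dm where "Dm = C^m"
  have Dm0: "Dm \<ge> 0" using C by (simp add: Dm_def)
  show ?thesis
  proof (intro exI[of _ "nat \<lceil>Dm\<rceil>"] allI impI, elim conjE)
    fix s w and Z :: "'a set"
    assume s: "0 < s" "s \<le> 1" and fin: "finite Z" and Zsub: "Z \<subseteq> cball w (c * s)" and sp: "sepd s Z"
    define B where "B = cball w ((c+1) * s)"
    have Bfin: "\<mu> B < \<infinity>" unfolding B_def by (rule ball_finite[OF om lf dbl])
    have "(c+1)* s > 0" using s c by simp
    hence Bpos: "0 < \<mu> B" using fs unfolding B_def full_support_def by blast
    have each: "\<mu> B \<le> ennreal Dm * \<mu> (cball z (s/2))" if "z \<in> Z" for z
    proof -
      have "B \<subseteq> cball z (2^m * (s/2))"
      proof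
        fix y assume "y \<in> B"
        hence "dist w y \<le> (c+1) * s" unfolding B_def by simp
        moreover have "dist w z \<le> c * s" using that Zsub by auto
        moreover have "(2*c+1) * s \<le> 2^m * (s/2)"
        proof -
          have "(4*c+2) * (s/2) \<le> 2^m * (s/2)" using m s by (intro mult_right_mono) auto
          thus ?thesis by (simp add: algebra_simps)
        qed
        ultimately have "dist z y \<le> 2^m * (s/2)" using dist_triangle[of z y w]
          by (simp add: dist_commute algebra_simps)
        thus "y \<in> cball z (2^m * (s/2))" by simp
      qed
      hence "\<mu> B \<le> \<mu> (cball z (2^m * (s/2)))" by (rule om_mono[OF om])
      also have "\<dots> \<le> ennreal Dm * \<mu> (cball z (s/2))"
        unfolding Dm_def using s by (intro doubling_iter[OF C(2) C(1)]) auto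
      finally show ?thesis .
    qed
    have disj: "\<forall>z\<in>Z. \<forall>z'\<in>Z. z \<noteq> z' \<longrightarrow> cball z (s/2) \<inter> cball z' (s/2) = {}"
    proof (intro ballI impI)
      fix z z' assume "z \<in> Z" "z' \<in> Z" "z \<noteq> z'"
      hence "s < dist z z'" using sp unfolding sepd_def by blast
      show "cball z (s/2) \<inter> cball z' (s/2) = {}"
      proof (rule ccontr)
        assume "cball z (s/2) \<inter> cball z' (s/2) \<noteq> {}"
        then obtain y where "dist z y \<le> s/2" "dist z' y \<le> s/2" by auto
        hence "dist z z' \<le> s" using dist_triangle3[of z z' y] by (simp add: dist_commute)
        thus False using \<open>s < dist z z'\<close> by linarith
      qed
    qed
    have Usub: "(\<Union>z\<in>Z. cball z (s/2)) \<subseteq> B"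
    proof
      fix y assume "y \<in> (\<Union>z\<in>Z. cball z (s/2))"
      then obtain z where "z \<in> Z" "dist z y \<le> s/2" by auto
      moreover hence "dist w z \<le> c * s" using Zsub by auto
      ultimately have "dist w y \<le> (c+1) * s" using dist_triangle[of w y z] s by (simp add: algebra_simps)
      thus "y \<in> B" unfolding B_def by simp
    qed
    have "ennreal (real (card Z)) * \<mu> B = (\<Sum>z\<in>Z. \<mu> B)"
      by (simp flip: ennreal_of_nat_eq_real_of_nat)
    also have "\<dots> \<le> (\<Sum>z\<in>Z. ennreal Dm * \<mu> (cball z (s/2)))" by (rule sum_mono) (rule each)
    also have "\<dots> = ennreal Dm * \<mu> (\<Union>z\<in>Z. cball z (s/2))"
      by (simp add: mu_disjoint_sum[OF br fin om disj] sum_distrib_left)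
    also have "\<dots> \<le> ennreal Dm * \<mu> B" by (intro mult_left_mono om_mono[OF om Usub]) simp
    finally have le: "ennreal (real (card Z)) * \<mu> B \<le> ennreal Dm * \<mu> B" .
    obtain b where b: "\<mu> B = ennreal b" "b > 0" using Bfin Bpos
      by (metis ennreal_cases ennreal_less_zero_iff infinity_ennreal_def less_irrefl)
    have "ennreal (real (card Z) * b) \<le> ennreal (Dm * b)"
      using le b by (simp add: ennreal_mult Dm0)
    hence "real (card Z) * b \<le> Dm * b" using Dm0 b by (simp add: ennreal_le_iff)
    hence "real (card Z) \<le> Dm" using b by simp
    thus "card Z \<le> nat \<lceil>Dm\<rceil>" by linarith
  qed
qed

lemma covering:
  fixes E :: "'a::metric_space set"
  assumes M: "\<forall>s (w::'a) Z. 0 < s \<and> s \<le> 1 \<and> finite Z \<and> Z \<subseteq> cball w (c * s) \<and> sepd s Z \<longrightarrow> card Z \<le> M"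
    and s: "0 < s" "s \<le> 1" and E: "E \<subseteq> cball w (c * s)"
  shows "\<exists>Z. finite Z \<and> Z \<subseteq> E \<and> card Z \<le> M \<and> E \<subseteq> (\<Union>z\<in>Z. cball z s)"
proof -
  define P where "P = (\<lambda>n. \<exists>Z. finite Z \<and> Z \<subseteq> E \<and> sepd s Z \<and> card Z = n)"
  have P0: "P 0" unfolding P_def sepd_def by (intro exI[of _ "{}"]) auto
  have Pb: "\<forall>y. P y \<longrightarrow> y \<le> M"
  proof (intro allI impI)
    fix y assume "P y"
    then obtain Z where Z: "finite Z" "Z \<subseteq> E" "sepd s Z" "card Z = y" unfolding P_def by blast
    have "Z \<subseteq> cball w (c * s)" using Z(2) E by blast
    hence "card Z \<le> M" using s Z(1,3) by (intro M[rule_format]) blast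
    thus "y \<le> M" using Z(4) by simp
  qed
  obtain n where n: "P n" "\<forall>y. P y \<longrightarrow> y \<le> n" using Nat.ex_has_greatest_nat[OF P0 Pb] by blast
  then obtain Z where Z: "finite Z" "Z \<subseteq> E" "sepd s Z" "card Z = n" unfolding P_def by blast
  have "E \<subseteq> (\<Union>z\<in>Z. cball z s)"
  proof
    fix e assume e: "e \<in> E"
    show "e \<in> (\<Union>z\<in>Z. cball z s)"
    proof (rule ccontr)
      assume ne: "e \<notin> (\<Union>z\<in>Z. cball z s)"
      have far: "\<forall>z\<in>Z. s < dist z e"
      proof
        fix z assume "z \<in> Z"
        hence "e \<notin> cball z s" using ne by blast
        thus "s < dist z e" by (simp add: not_le)
      qed
      have eZ: "e \<notin> Z"
      proof
        assume "e \<in> Z"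
        hence "s < dist e e" using far by blast
        thus False using s by simp
      qed
      have "sepd s (insert e Z)" unfolding sepd_def
      proof (intro ballI impI)
        fix a b assume a: "a \<in> insert e Z" and b: "b \<in> insert e Z" and ab: "a \<noteq> b"
        show "s < dist a b"
        proof (cases "a = e")
          case True
          hence "b \<in> Z" using b ab by blast
          thus ?thesis using far True by (simp add: dist_commute)
        next
          case False
          hence aZ: "a \<in> Z" using a by blast
          show ?thesis
          proof (cases "b = e")
            case True thus ?thesis using far aZ by simp
          next
            case False
            hence "b \<in> Z" using b by blast
            thus ?thesis using Z(3) aZ ab unfolding sepd_def by blast
          qed
        qed
      qed
      moreover have "finite (insert e Z)" "insert e Z \<subseteq> E" "card (insert e Z) = Suc n"
        using Z e eZ by auto
      ultimately have "P (Suc n)" unfolding P_def by blast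
      hence "Suc n \<le> n" using n(2) by blast
      thus False by simp
    qed
  qed
  moreover have "card Z \<le> M" using Pb n(1) Z(4) by blast
  ultimately show ?thesis using Z(1,2) by blast
qed

lemma doubling_Q:
  fixes \<mu> :: "'a::polish_space set \<Rightarrow> ennreal"
  assumes set: "standing_setting \<mu> p" and c: "c \<ge> 1"
  shows "\<exists>Q\<ge>0. \<forall>(x::'a) z s. 0 < s \<and> s \<le> 1 \<and> dist x z \<le> 2 * c * s \<longrightarrow>
     \<mu> (cball z s) \<le> ennreal Q * \<mu> (cball x s)"
proof -
  have om: "outer_measure \<mu>" and dbl: "unif_loc_doubling \<mu>"
    using set unfolding standing_setting_def by auto
  obtain m :: nat where m: "2*c+1 < 2^m" using real_arch_pow[of 2 "2*c+1"] by auto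
  obtain C where C: "C \<ge> 0" "\<forall>r x. 0 < r \<and> r \<le> 2^m \<longrightarrow> \<mu> (cball x (2*r)) \<le> ennreal C * \<mu> (cball x r)"
    using doubling_const[OF dbl, of "2^m"] by auto
  show ?thesis
  proof (intro exI[of _ "C^m"] conjI allI impI)
    show "0 \<le> C^m" using C by simp
    fix x z :: 'a and s :: real
    assume a: "0 < s \<and> s \<le> 1 \<and> dist x z \<le> 2 * c * s"
    have "(2*c+1) * s \<le> 2^m * s" using m a by (intro mult_right_mono) auto
    have "cball z s \<subseteq> cball x (2^m * s)"
    proof
      fix y assume "y \<in> cball z s"
      hence "dist z y \<le> s" by simp
      hence "dist x y \<le> (2*c+1) * s" using a dist_triangle[of x y z] by (simp add: algebra_simps)
      thus "y \<in> cball x (2^m * s)" using \<open>(2*c+1) * s \<le> 2^m * s\<close> by simp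
    qed
    hence "\<mu> (cball z s) \<le> \<mu> (cball x (2^m * s))" by (rule om_mono[OF om])
    also have "\<dots> \<le> ennreal (C^m) * \<mu> (cball x s)"
      using a by (intro doubling_iter[OF C(2) C(1)]) auto
    finally show "\<mu> (cball z s) \<le> ennreal (C^m) * \<mu> (cball x s)" .
  qed
qed

lemma pow_identity:
  "2 powr (real k * (\<theta> - t)) * (2 powr (- real k)) powr (- t) = 2 powr (real k * \<theta>)"
proof -
  have "((2::real) powr (- real k)) powr (- t) = 2 powr (real k * t)" by (subst powr_powr) simp
  thus ?thesis by (simp add: powr_add[symmetric] algebra_simps)
qed

lemma main_bound:
  fixes \<mu> :: "'a::polish_space set \<Rightarrow> ennreal" and S :: "nat \<Rightarrow> 'a set"
  assumes om: "outer_measure \<mu>"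
    and M: "\<forall>s (w::'a) Z. 0 < s \<and> s \<le> 1 \<and> finite Z \<and> Z \<subseteq> cball w (c * s) \<and> sepd s Z \<longrightarrow> card Z \<le> M"
    and Q: "\<forall>(x::'a) z s. 0 < s \<and> s \<le> 1 \<and> dist x z \<le> 2 * c * s \<longrightarrow> \<mu> (cball z s) \<le> ennreal Q * \<mu> (cball x s)"
    and Q0: "Q \<ge> 0"
    and lo: "\<And>j x r. j \<in> {1..N} \<Longrightarrow> x \<in> S j \<Longrightarrow> 0 < r \<Longrightarrow> r \<le> 1 \<Longrightarrow>
       ennreal (k1 j) * \<mu> (cball x r) * ennreal (r powr (-th j)) \<le> H_cod \<mu> (th j) (cball x r \<inter> S j)"
    and up: "\<And>j x r. j \<in> {1..N} \<Longrightarrow> x \<in> S j \<Longrightarrow> 0 < r \<Longrightarrow> r \<le> 1 \<Longrightarrow>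
       H_cod \<mu> (th j) (cball x r \<inter> S j) \<le> ennreal (k2 j) * \<mu> (cball x r) * ennreal (r powr (-th j))"
    and k2: "\<And>j. j \<in> {1..N} \<Longrightarrow> 0 \<le> k2 j"
    and K1: "K1 > 0" "\<And>j. j \<in> {1..N} \<Longrightarrow> K1 \<le> k1 j"
    and i: "i \<in> {1..N}" and x: "x \<in> S i" and sub: "cball x s \<subseteq> cball xu (c * s)"
    and sdef: "s = 2 powr (- real k)"
  shows "m_k \<mu> \<theta> N th S k (cball xu (c * s)) \<le>
     ennreal ((real M * Q * (\<Sum>j\<in>{1..N}. k2 j)) / K1 + 1) * ennreal (2 powr (real k * (\<theta> - th i)))
       * H_cod \<mu> (th i) (cball x s \<inter> S i)"
proof -
  have s0: "0 < s" using sdef by simp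
  have "(2::real) powr (- real k) \<le> 2 powr 0" by (rule powr_mono) auto
  hence s1: "s \<le> 1" using sdef by simp
  define P where "P = 2 powr (real k * \<theta>)"
  have P0: "P > 0" unfolding P_def by simp
  define mx where "mx = \<mu> (cball x s)"
  have xin: "dist xu x \<le> c * s" using sub s0 by (metis centre_in_cball less_imp_le mem_cball subsetD)
  have termb: "ennreal (2 powr (real k * (\<theta> - th j))) * H_cod \<mu> (th j) (cball xu (c * s) \<inter> S j)
      \<le> ennreal (real M * Q * k2 j * P) * mx" if j: "j \<in> {1..N}" for j
  proof -
    define E where "E = cball xu (c * s) \<inter> S j"
    obtain Z where Z: "finite Z" "Z \<subseteq> E" "card Z \<le> M" "E \<subseteq> (\<Union>z\<in>Z. cball z s)"
      using covering[OF M s0 s1, of E xu] unfolding E_def by blast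
    have "E \<subseteq> (\<Union>z\<in>Z. cball z s \<inter> S j)" using Z(4) unfolding E_def by blast
    hence "H_cod \<mu> (th j) E \<le> H_cod \<mu> (th j) (\<Union>z\<in>Z. cball z s \<inter> S j)" by (rule H_cod_mono)
    also have "\<dots> \<le> (\<Sum>z\<in>Z. H_cod \<mu> (th j) (cball z s \<inter> S j))" by (rule H_cod_UN[OF Z(1)])
    also have "\<dots> \<le> (\<Sum>z\<in>Z. ennreal (k2 j) * (ennreal Q * mx) * ennreal (s powr (-th j)))"
    proof (rule sum_mono)
      fix z assume z: "z \<in> Z"
      hence zS: "z \<in> S j" and zb: "dist xu z \<le> c * s" using Z(2) unfolding E_def by auto
      have "dist x z \<le> 2 * c * s" using xin zb dist_triangle[of x z xu] by (simp add: dist_commute)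
      hence muz: "\<mu> (cball z s) \<le> ennreal Q * mx" using Q s0 s1 unfolding mx_def by blast
      have "H_cod \<mu> (th j) (cball z s \<inter> S j) \<le> ennreal (k2 j) * \<mu> (cball z s) * ennreal (s powr (-th j))"
        by (rule up[OF j zS s0 s1])
      also have "\<dots> \<le> ennreal (k2 j) * (ennreal Q * mx) * ennreal (s powr (-th j))"
        by (intro mult_right_mono mult_left_mono muz) auto
      finally show "H_cod \<mu> (th j) (cball z s \<inter> S j) \<le> ennreal (k2 j) * (ennreal Q * mx) * ennreal (s powr (-th j))" .
    qed
    also have "\<dots> = of_nat (card Z) * (ennreal (k2 j) * (ennreal Q * mx) * ennreal (s powr (-th j)))"
      by simp
    also have "\<dots> \<le> of_nat M * (ennreal (k2 j) * (ennreal Q * mx) * ennreal (s powr (-th j)))"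
      using Z(3) by (intro mult_right_mono) auto
    also have "\<dots> = ennreal (real M * Q * k2 j * s powr (-th j)) * mx"
      using k2[OF j] Q0 by (simp add: ennreal_mult ennreal_of_nat_eq_real_of_nat mult_ac)
    finally have HE: "H_cod \<mu> (th j) E \<le> ennreal (real M * Q * k2 j * s powr (-th j)) * mx" .
    have "ennreal (2 powr (real k * (\<theta> - th j))) * H_cod \<mu> (th j) E
       \<le> ennreal (2 powr (real k * (\<theta> - th j))) * (ennreal (real M * Q * k2 j * s powr (-th j)) * mx)"
      by (intro mult_left_mono HE) auto
    also have "\<dots> = ennreal (2 powr (real k * (\<theta> - th j)) * (real M * Q * k2 j * s powr (-th j))) * mx"
      using k2[OF j] Q0 by (simp add: ennreal_mult mult.assoc)
    also have "2 powr (real k * (\<theta> - th j)) * (real M * Q * k2 j * s powr (-th j)) = real M * Q * k2 j * P"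
      using pow_identity[of k \<theta> "th j"] unfolding sdef P_def by (simp add: mult_ac)
    finally show ?thesis unfolding E_def .
  qed
  have "m_k \<mu> \<theta> N th S k (cball xu (c * s)) \<le> (\<Sum>j\<in>{1..N}. ennreal (real M * Q * k2 j * P) * mx)"
    unfolding m_k_def by (rule sum_mono) (rule termb)
  also have "\<dots> = ennreal (real M * Q * (\<Sum>j\<in>{1..N}. k2 j) * P) * mx"
  proof -
    have "(\<Sum>j\<in>{1..N}. ennreal (real M * Q * k2 j * P)) = ennreal (\<Sum>j\<in>{1..N}. real M * Q * k2 j * P)"
      using k2 Q0 P0 by (intro sum_ennreal) auto
    also have "(\<Sum>j\<in>{1..N}. real M * Q * k2 j * P) = real M * Q * (\<Sum>j\<in>{1..N}. k2 j) * P"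
      by (simp add: sum_distrib_left sum_distrib_right mult_ac)
    finally have "(\<Sum>j\<in>{1..N}. ennreal (real M * Q * k2 j * P)) = ennreal (real M * Q * (\<Sum>j\<in>{1..N}. k2 j) * P)" .
    thus ?thesis by (simp only: sum_distrib_right[symmetric])
  qed
  also have "\<dots> \<le> ennreal (((real M * Q * (\<Sum>j\<in>{1..N}. k2 j)) / K1 + 1) * k1 i * P) * mx"
  proof (rule mult_right_mono, rule ennreal_leI)
    define A where "A = real M * Q * (\<Sum>j\<in>{1..N}. k2 j)"
    have A0: "A \<ge> 0" unfolding A_def using Q0 k2 by (intro mult_nonneg_nonneg sum_nonneg) auto
    have "A \<le> (A / K1 + 1) * K1" using K1(1) by (simp add: field_simps)
    also have "\<dots> \<le> (A / K1 + 1) * k1 i" using K1 A0 i by (intro mult_left_mono) auto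
    finally have "A \<le> (A / K1 + 1) * k1 i" .
    hence "A * P \<le> (A / K1 + 1) * k1 i * P" using P0 by (intro mult_right_mono) auto
    thus "real M * Q * (\<Sum>j\<in>{1..N}. k2 j) * P \<le> ((real M * Q * (\<Sum>j\<in>{1..N}. k2 j)) / K1 + 1) * k1 i * P"
      unfolding A_def .
    show "0 \<le> mx" by simp
  qed
  also have "\<dots> = ennreal ((real M * Q * (\<Sum>j\<in>{1..N}. k2 j)) / K1 + 1) * ennreal (2 powr (real k * (\<theta> - th i)))
       * (ennreal (k1 i) * mx * ennreal (s powr (-th i)))"
  proof -
    define a where "a = (real M * Q * (\<Sum>j\<in>{1..N}. k2 j)) / K1 + 1"
    define b where "b = 2 powr (real k * (\<theta> - th i))"
    define cc where "cc = s powr (-th i)"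
    have eq: "a * k1 i * P = a * b * k1 i * cc"
      using pow_identity[of k \<theta> "th i"] unfolding sdef P_def b_def cc_def by (simp add: mult_ac)
    have k10: "k1 i \<ge> 0" using K1 i by (meson less_le_trans less_imp_le)
    have a0: "a \<ge> 0" unfolding a_def
      using Q0 k2 K1 by (intro add_nonneg_nonneg divide_nonneg_pos mult_nonneg_nonneg sum_nonneg) auto
    have b0: "b \<ge> 0" and c0: "cc \<ge> 0" unfolding b_def cc_def by auto
    have "ennreal (a * k1 i * P) * mx = ennreal (a * b * k1 i * cc) * mx" by (simp only: eq)
    also have "ennreal (a * b * k1 i * cc) = ennreal a * ennreal b * ennreal (k1 i) * ennreal cc"
      using a0 b0 c0 k10 by (simp add: ennreal_mult)
    also have "ennreal a * ennreal b * ennreal (k1 i) * ennreal cc * mx = ennreal a * ennreal b * (ennreal (k1 i) * mx * ennreal cc)"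
      by (simp add: mult_ac)
    finally show ?thesis unfolding a_def b_def cc_def .
  qed
  also have "\<dots> \<le> ennreal ((real M * Q * (\<Sum>j\<in>{1..N}. k2 j)) / K1 + 1) * ennreal (2 powr (real k * (\<theta> - th i)))
       * H_cod \<mu> (th i) (cball x s \<inter> S i)"
    unfolding mx_def by (intro mult_left_mono lo[OF i x s0 s1]) auto
  finally show ?thesis .
qed

theorem proposition3p2:
  fixes \<mu> :: "'a::polish_space set \<Rightarrow> ennreal"
    and p \<theta>low \<theta> :: real and N :: nat and th :: "nat \<Rightarrow> real" and S :: "nat \<Rightarrow> 'a set"
  assumes setting: "standing_setting \<mu> p"
    and "0 \<le> \<theta>low" and "\<theta>low < min p (Q_low \<mu>)"
    and "\<theta>low \<le> \<theta>" and "\<theta> < p"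
    and "2 \<le> N"
    and "0 \<le> th 1" and "\<And>i j. 1 \<le> i \<Longrightarrow> i < j \<Longrightarrow> j \<le> N \<Longrightarrow> th i < th j"
    and "th N = \<theta>low"
    and "\<And>i. 1 \<le> i \<Longrightarrow> i \<le> N \<Longrightarrow> S i \<in> ADR \<mu> (th i)"
  shows "\<forall>c::real \<ge> 1. \<exists>C::real > 0. \<forall>i\<in>{1..N}. \<forall>k::nat. \<forall>xu x.
     x \<in> S i \<and> cball x (2 powr (- real k)) \<subseteq> cball xu (c * 2 powr (- real k)) \<longrightarrow>
       ennreal (2 powr (real k * (\<theta> - th i))) * H_cod \<mu> (th i) (cball xu (c * 2 powr (- real k)) \<inter> S i)
         \<le> m_k \<mu> \<theta> N th S k (cball xu (c * 2 powr (- real k)))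
       \<and> m_k \<mu> \<theta> N th S k (cball xu (c * 2 powr (- real k)))
         \<le> ennreal C * ennreal (2 powr (real k * (\<theta> - th i))) * H_cod \<mu> (th i) (cball x (2 powr (- real k)) \<inter> S i)"
proof (intro allI impI)
  fix c :: real assume c: "1 \<le> c"
  note ADRs = assms(10)
  have om: "outer_measure \<mu>" using setting unfolding standing_setting_def by auto
  obtain M where M: "\<forall>s (w::'a) Z. 0 < s \<and> s \<le> 1 \<and> finite Z \<and> Z \<subseteq> cball w (c * s) \<and> sepd s Z \<longrightarrow> card Z \<le> M"
    using packing[OF setting c] by blast
  obtain Q where Q0: "Q \<ge> 0" and Q: "\<forall>(x::'a) z s. 0 < s \<and> s \<le> 1 \<and> dist x z \<le> 2 * c * s \<longrightarrow> \<mu> (cball z s) \<le> ennreal Q * \<mu> (cball x s)"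
    using doubling_Q[OF setting c] by blast
  have "\<forall>j\<in>{1..N}. \<exists>kk::real\<times>real. 0 < fst kk \<and> 0 < snd kk \<and> (\<forall>x\<in>S j. \<forall>r. 0 < r \<and> r \<le> 1 \<longrightarrow>
        ennreal (fst kk) * \<mu> (cball x r) * ennreal (r powr (-th j)) \<le> H_cod \<mu> (th j) (cball x r \<inter> S j)
        \<and> H_cod \<mu> (th j) (cball x r \<inter> S j) \<le> ennreal (snd kk) * \<mu> (cball x r) * ennreal (r powr (-th j)))"
  proof
    fix j assume "j \<in> {1..N}"
    hence "S j \<in> ADR \<mu> (th j)" using ADRs by auto
    then obtain a b where "0 < a" "0 < b" "\<forall>x\<in>S j. \<forall>r. 0 < r \<and> r \<le> 1 \<longrightarrow>
        ennreal a * \<mu> (cball x r) * ennreal (r powr (-th j)) \<le> H_cod \<mu> (th j) (cball x r \<inter> S j)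
        \<and> H_cod \<mu> (th j) (cball x r \<inter> S j) \<le> ennreal b * \<mu> (cball x r) * ennreal (r powr (-th j))"
      unfolding ADR_def by blast
    thus "\<exists>kk::real\<times>real. 0 < fst kk \<and> 0 < snd kk \<and> (\<forall>x\<in>S j. \<forall>r. 0 < r \<and> r \<le> 1 \<longrightarrow>
        ennreal (fst kk) * \<mu> (cball x r) * ennreal (r powr (-th j)) \<le> H_cod \<mu> (th j) (cball x r \<inter> S j)
        \<and> H_cod \<mu> (th j) (cball x r \<inter> S j) \<le> ennreal (snd kk) * \<mu> (cball x r) * ennreal (r powr (-th j)))"
      by (intro exI[of _ "(a, b)"]) simp
  qed
  then obtain kk where kk: "\<forall>j\<in>{1..N}. 0 < fst (kk j) \<and> 0 < snd (kk j) \<and> (\<forall>x\<in>S j. \<forall>r. 0 < r \<and> r \<le> 1 \<longrightarrow>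
        ennreal (fst (kk j)) * \<mu> (cball x r) * ennreal (r powr (-th j)) \<le> H_cod \<mu> (th j) (cball x r \<inter> S j)
        \<and> H_cod \<mu> (th j) (cball x r \<inter> S j) \<le> ennreal (snd (kk j)) * \<mu> (cball x r) * ennreal (r powr (-th j)))"
    by (rule bchoice[elim_format]) blast
  define k1 where "k1 = (\<lambda>j. fst (kk j))"
  define k2 where "k2 = (\<lambda>j. snd (kk j))"
  have lo: "\<And>j x r. j \<in> {1..N} \<Longrightarrow> x \<in> S j \<Longrightarrow> 0 < r \<Longrightarrow> r \<le> 1 \<Longrightarrow>
       ennreal (k1 j) * \<mu> (cball x r) * ennreal (r powr (-th j)) \<le> H_cod \<mu> (th j) (cball x r \<inter> S j)"
    using kk unfolding k1_def by blast
  have up: "\<And>j x r. j \<in> {1..N} \<Longrightarrow> x \<in> S j \<Longrightarrow> 0 < r \<Longrightarrow> r \<le> 1 \<Longrightarrow>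
       H_cod \<mu> (th j) (cball x r \<inter> S j) \<le> ennreal (k2 j) * \<mu> (cball x r) * ennreal (r powr (-th j))"
    using kk unfolding k2_def by blast
  have k2p: "\<And>j. j \<in> {1..N} \<Longrightarrow> 0 \<le> k2 j" using kk unfolding k2_def by (meson less_imp_le)
  define K1 where "K1 = Min (k1 ` {1..N})"
  have ne: "{1..N} \<noteq> {}" using assms(6) by auto
  have K1p: "K1 > 0" unfolding K1_def using kk ne by (subst Min_gr_iff) (auto simp: k1_def)
  have K1le: "\<And>j. j \<in> {1..N} \<Longrightarrow> K1 \<le> k1 j" unfolding K1_def by (rule Min_le) auto
  define Cc where "Cc = (real M * Q * (\<Sum>j\<in>{1..N}. k2 j)) / K1 + 1"
  have Cc0: "Cc > 0" unfolding Cc_def using Q0 k2p K1p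
    by (intro add_nonneg_pos divide_nonneg_pos mult_nonneg_nonneg sum_nonneg) auto
  show "\<exists>C::real > 0. \<forall>i\<in>{1..N}. \<forall>k::nat. \<forall>xu x.
     x \<in> S i \<and> cball x (2 powr (- real k)) \<subseteq> cball xu (c * 2 powr (- real k)) \<longrightarrow>
       ennreal (2 powr (real k * (\<theta> - th i))) * H_cod \<mu> (th i) (cball xu (c * 2 powr (- real k)) \<inter> S i)
         \<le> m_k \<mu> \<theta> N th S k (cball xu (c * 2 powr (- real k)))
       \<and> m_k \<mu> \<theta> N th S k (cball xu (c * 2 powr (- real k)))
         \<le> ennreal C * ennreal (2 powr (real k * (\<theta> - th i))) * H_cod \<mu> (th i) (cball x (2 powr (- real k)) \<inter> S i)"
  proof (intro exI[of _ Cc] conjI Cc0 ballI allI impI)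
    fix i k xu x
    assume i: "i \<in> {1..N}" and h: "x \<in> S i \<and> cball x (2 powr (- real k)) \<subseteq> cball xu (c * 2 powr (- real k))"
    show "ennreal (2 powr (real k * (\<theta> - th i))) * H_cod \<mu> (th i) (cball xu (c * 2 powr (- real k)) \<inter> S i)
         \<le> m_k \<mu> \<theta> N th S k (cball xu (c * 2 powr (- real k)))"
      unfolding m_k_def using i
      by (rule member_le_sum[where f="\<lambda>j. ennreal (2 powr (real k * (\<theta> - th j))) * H_cod \<mu> (th j) (cball xu (c * 2 powr (- real k)) \<inter> S j)"]) auto
    show "m_k \<mu> \<theta> N th S k (cball xu (c * 2 powr (- real k)))
         \<le> ennreal Cc * ennreal (2 powr (real k * (\<theta> - th i))) * H_cod \<mu> (th i) (cball x (2 powr (- real k)) \<inter> S i)"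
      unfolding Cc_def
      by (rule main_bound[OF om M Q Q0 lo up k2p K1p K1le i]) (use h in auto)
  qed
qed

end
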